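(* Let $G$ be a cyclically $4$-edge-connected cubic graph with a distinguished edge $e$ that is not contained in any cyclic $4$-edge-cut of $G$. Suppose that for every cyclic $4$-edge-cut $E(A,B)$ of $G$ with $e$ an edge of $G[A]$, the set $B$ is not solid. Then for every such cut, $G[B]$ is a twisted net.
   Context: An edge-cut $E(A,B)$ is a $k$-edge-cut if it has exactly $k$ edges, cyclic if both $G[A]$ and $G[B]$ contain a cycle; $G$ is cyclically $4$-edge-connected if it has no cyclic edge-cut with fewer than four edges. For a cyclic $4$-edge-cut $E(A,B)$, $B$ is solid if there is no partition of $B$ into two parts, each with at least two vertices, joined by exactly two edges of $G[B]$. In a graph with all degrees $2$ or $3$, the degree-two vertices are corners; for a graph consisting of a single edge, both its ends are corners. Twisted nets are defined inductively: a $4$-cycle is a twisted net; if $T$ is a twisted net and $H$ is (disjoint from $T$) either a twisted net or a single edge, then the graph obtained from $T\cup H$ by adding edges $uv$ and $u'v'$, where $u\neq u'$ are corners of $T$ and $v\ne v'$ are corners of $H$, is a twisted net. *)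

theory Defs
  imports Main
begin

definition graph :: "'a set \<Rightarrow> 'a set set \<Rightarrow> bool" where
  "graph V E \<longleftrightarrow> finite V \<and> (\<forall>e\<in>E. \<exists>x y. x \<noteq> y \<and> x \<in> V \<and> y \<in> V \<and> e = {x, y})"

definition degree :: "'a set set \<Rightarrow> 'a \<Rightarrow> nat" where
  "degree E v = card {e\<in>E. v \<in> e}"

definition cubic :: "'a set \<Rightarrow> 'a set set \<Rightarrow> bool" where
  "cubic V E \<longleftrightarrow> graph V E \<and> (\<forall>v\<in>V. degree E v = 3)"

definition induced_edges :: "'a set set \<Rightarrow> 'a set \<Rightarrow> 'a set set" where
  "induced_edges E A = {e\<in>E. e \<subseteq> A}"

definition has_cycle :: "'a set \<Rightarrow> 'a set set \<Rightarrow> bool" where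
  "has_cycle V E \<longleftrightarrow> (\<exists>xs. length xs \<ge> 3 \<and> distinct xs \<and> set xs \<subseteq> V \<and>
      (\<forall>i < length xs - 1. {xs ! i, xs ! Suc i} \<in> E) \<and> {last xs, hd xs} \<in> E)"

definition cut_edges :: "'a set set \<Rightarrow> 'a set \<Rightarrow> 'a set \<Rightarrow> 'a set set" where
  "cut_edges E A B = {e\<in>E. e \<inter> A \<noteq> {} \<and> e \<inter> B \<noteq> {}}"

definition is_partition :: "'a set \<Rightarrow> 'a set \<Rightarrow> 'a set \<Rightarrow> bool" where
  "is_partition V A B \<longleftrightarrow> A \<union> B = V \<and> A \<inter> B = {}"

definition cyclic_cut :: "'a set \<Rightarrow> 'a set set \<Rightarrow> 'a set \<Rightarrow> 'a set \<Rightarrow> bool" where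
  "cyclic_cut V E A B \<longleftrightarrow> is_partition V A B \<and>
     has_cycle A (induced_edges E A) \<and> has_cycle B (induced_edges E B)"

definition cyclic_k_cut :: "nat \<Rightarrow> 'a set \<Rightarrow> 'a set set \<Rightarrow> 'a set \<Rightarrow> 'a set \<Rightarrow> bool" where
  "cyclic_k_cut k V E A B \<longleftrightarrow> cyclic_cut V E A B \<and> card (cut_edges E A B) = k"

definition cyclically_4_edge_connected :: "'a set \<Rightarrow> 'a set set \<Rightarrow> bool" where
  "cyclically_4_edge_connected V E \<longleftrightarrow>
     (\<forall>A B. cyclic_cut V E A B \<longrightarrow> card (cut_edges E A B) \<ge> 4)"

definition solid :: "'a set set \<Rightarrow> 'a set \<Rightarrow> bool" where
  "solid E B \<longleftrightarrow> \<not> (\<exists>B1 B2. is_partition B B1 B2 \<and> card B1 \<ge> 2 \<and> card B2 \<ge> 2 \<and>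
       card (cut_edges (induced_edges E B) B1 B2) = 2)"

definition corners :: "'a set \<Rightarrow> 'a set set \<Rightarrow> 'a set" where
  "corners V E = {v\<in>V. degree E v = 2}"

definition is_4cycle :: "'a set \<Rightarrow> 'a set set \<Rightarrow> bool" where
  "is_4cycle V E \<longleftrightarrow> (\<exists>a b c d. distinct [a, b, c, d] \<and> V = {a, b, c, d} \<and>
      E = {{a, b}, {b, c}, {c, d}, {d, a}})"

definition is_single_edge :: "'a set \<Rightarrow> 'a set set \<Rightarrow> bool" where
  "is_single_edge V E \<longleftrightarrow> (\<exists>x y. x \<noteq> y \<and> V = {x, y} \<and> E = {{x, y}})"

inductive twisted_net :: "'a set \<Rightarrow> 'a set set \<Rightarrow> bool" where
  base: "is_4cycle V E \<Longrightarrow> twisted_net V E"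
| step_net: "\<lbrakk> twisted_net VT ET; twisted_net VH EH; VT \<inter> VH = {};
      u \<in> corners VT ET; u' \<in> corners VT ET; u \<noteq> u';
      v \<in> corners VH EH; v' \<in> corners VH EH; v \<noteq> v' \<rbrakk>
    \<Longrightarrow> twisted_net (VT \<union> VH) (ET \<union> EH \<union> {{u, v}, {u', v'}})"
| step_edge: "\<lbrakk> twisted_net VT ET; is_single_edge VH EH; VT \<inter> VH = {};
      u \<in> corners VT ET; u' \<in> corners VT ET; u \<noteq> u';
      v \<in> VH; v' \<in> VH; v \<noteq> v' \<rbrakk>
    \<Longrightarrow> twisted_net (VT \<union> VH) (ET \<union> EH \<union> {{u, v}, {u', v'}})"

end

theory Submission
  imports Defs
begin


lemma has_cycle_mono:
  assumes "has_cycle S F" "S \<subseteq> S'" "F \<subseteq> F'"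
  shows "has_cycle S' F'"
  using assms unfolding has_cycle_def by blast

lemma has_cycle_card:
  assumes "has_cycle S F" "finite S"
  shows "card S \<ge> 3"
proof -
  from assms obtain xs where "length xs \<ge> 3" "distinct xs" "set xs \<subseteq> S"
    unfolding has_cycle_def by blast
  then show ?thesis using card_mono[OF assms(2)] distinct_card by (metis order_trans)
qed

definition is_path :: "'a set set \<Rightarrow> 'a set \<Rightarrow> 'a list \<Rightarrow> bool" where
  "is_path F S xs \<longleftrightarrow> xs \<noteq> [] \<and> distinct xs \<and> set xs \<subseteq> S \<and> (\<forall>i < length xs - 1. {xs ! i, xs ! Suc i} \<in> F)"

lemma mindeg_cycle:
  assumes fin: "finite S" and ne: "S \<noteq> {}"
    and edges: "\<forall>e\<in>F. \<exists>x y. x \<noteq> y \<and> x \<in> S \<and> y \<in> S \<and> e = {x, y}"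
    and deg: "\<forall>v\<in>S. degree F v \<ge> 2"
  shows "has_cycle S F"
proof -
  obtain v where v: "v \<in> S" using ne by blast
  have p0: "is_path F S [v]" using v by (simp add: is_path_def)
  have bound: "\<forall>xs. is_path F S xs \<longrightarrow> length xs < Suc (card S)"
  proof (intro allI impI)
    fix xs assume "is_path F S xs"
    then have "distinct xs" "set xs \<subseteq> S" by (auto simp: is_path_def)
    then show "length xs < Suc (card S)"
      by (metis distinct_card card_mono fin le_imp_less_Suc)
  qed
  obtain xs where xs: "is_path F S xs" and mx: "\<forall>ys. is_path F S ys \<longrightarrow> length ys \<le> length xs"
    using Lattices_Big.ex_has_greatest_nat[of "is_path F S" "[v]" length "Suc (card S)"] p0 bound by blast
  have xsne: "xs \<noteq> []" and xsd: "distinct xs" and xsS: "set xs \<subseteq> S"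
    and xse: "\<forall>i < length xs - 1. {xs ! i, xs ! Suc i} \<in> F"
    using xs by (auto simp: is_path_def)
  define x where "x = hd xs"
  have x0: "xs ! 0 = x" using xsne by (simp add: x_def hd_conv_nth)
  have xS: "x \<in> S" using xsne xsS x_def by auto
  define N where "N = {y. {x,y} \<in> F}"
  have NS: "N \<subseteq> S" using edges by (auto simp: N_def) (metis doubleton_eq_iff)
  have finN: "finite N" using NS fin finite_subset by blast
  have sub: "{e\<in>F. x \<in> e} \<subseteq> (\<lambda>y. {x,y}) ` N"
  proof
    fix e assume "e \<in> {e\<in>F. x \<in> e}"
    then have eF: "e \<in> F" and xe: "x \<in> e" by auto
    then obtain a b where "e = {a,b}" using edges by blast
    then show "e \<in> (\<lambda>y. {x,y}) ` N" using eF xe unfolding N_def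
      by (auto simp: insert_commute)
  qed
  have "2 \<le> degree F x" using deg xS by blast
  also have "degree F x \<le> card ((\<lambda>y. {x,y}) ` N)"
    unfolding degree_def using sub finN by (simp add: card_mono)
  also have "\<dots> \<le> card N" by (rule card_image_le[OF finN])
  finally have cN: "card N \<ge> 2" .
  have xN: "x \<notin> N"
  proof
    assume "x \<in> N"
    then have "{x} \<in> F" by (simp add: N_def)
    then obtain a b where "a \<noteq> b" "{x} = {a,b}" using edges by blast
    then show False by (metis insertI1 insert_commute singletonD)
  qed
  have Nxs: "N \<subseteq> set xs"
  proof
    fix y assume yN: "y \<in> N"
    show "y \<in> set xs"
    proof (rule ccontr)
      assume ny: "y \<notin> set xs"
      have "is_path F S (y # xs)"
        unfolding is_path_def
      proof (intro conjI allI impI)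
        show "y # xs \<noteq> []" by simp
        show "distinct (y # xs)" using ny xsd by simp
        show "set (y # xs) \<subseteq> S" using xsS NS yN by auto
        fix i assume i: "i < length (y # xs) - 1"
        show "{(y # xs) ! i, (y # xs) ! Suc i} \<in> F"
        proof (cases i)
          case 0
          then show ?thesis using yN x0 by (simp add: N_def insert_commute)
        next
          case (Suc k)
          then have "k < length xs - 1" using i by simp
          then show ?thesis using xse Suc by simp
        qed
      qed
      then have "length (y # xs) \<le> length xs" using mx by blast
      then show False by simp
    qed
  qed
  obtain y where yN: "y \<in> N" and y1: "y \<noteq> xs ! 1"
  proof -
    obtain a b where "a \<in> N" "b \<in> N" "a \<noteq> b"
      using cN by (metis One_nat_def card_le_Suc0_iff_eq finN not_less_eq_eq numeral_2_eq_2)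
    then show ?thesis using that by metis
  qed
  have yxs: "y \<in> set xs" using yN Nxs by blast
  then obtain j where j: "j < length xs" "xs ! j = y" by (metis in_set_conv_nth)
  have "j \<noteq> 0" using j x0 xN yN by (metis)
  moreover have "j \<noteq> 1" using j y1 by auto
  ultimately have j2: "j \<ge> 2" by simp
  define ys where "ys = take (Suc j) xs"
  have lys: "length ys = Suc j" using j by (simp add: ys_def)
  show ?thesis
    unfolding has_cycle_def
  proof (intro exI conjI)
    show "3 \<le> length ys" using lys j2 by simp
    show "distinct ys" using xsd by (simp add: ys_def)
    show "set ys \<subseteq> S" using xsS set_take_subset[of "Suc j" xs] by (auto simp: ys_def)
    show "\<forall>i<length ys - 1. {ys ! i, ys ! Suc i} \<in> F"
    proof (intro allI impI)
      fix i assume "i < length ys - 1"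
      then have "i < j" using lys by simp
      then show "{ys ! i, ys ! Suc i} \<in> F" using xse j by (simp add: ys_def)
    qed
    have "last ys = y" using lys j by (metis diff_Suc_1 last_conv_nth lessI list.size(3) nat.distinct(1) nth_take ys_def)
    moreover have "hd ys = x" using xsne by (simp add: ys_def x_def hd_take)
    ultimately show "{last ys, hd ys} \<in> F" using yN by (simp add: N_def insert_commute)
  qed
qed

lemma many_edges_cycle:
  "finite S \<Longrightarrow> S \<noteq> {} \<Longrightarrow> (\<forall>e\<in>F. \<exists>x y. x \<noteq> y \<and> x \<in> S \<and> y \<in> S \<and> e = {x, y})
   \<Longrightarrow> card F \<ge> card S \<Longrightarrow> has_cycle S F"
proof (induction "card S" arbitrary: S F rule: less_induct)
  case less
  note fin = less.prems(1) and ne = less.prems(2) and edges = less.prems(3) and cF = less.prems(4)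
  have finF: "finite F"
  proof -
    have "F \<subseteq> Pow S" using edges by auto
    then show ?thesis using fin finite_subset by blast
  qed
  show ?case
  proof (cases "\<forall>v\<in>S. degree F v \<ge> 2")
    case True then show ?thesis using mindeg_cycle fin ne edges by blast
  next
    case False
    then obtain v where v: "v\<in>S" "degree F v \<le> 1" by force
    define S' where "S' = S - {v}"
    define F' where "F' = {e\<in>F. v \<notin> e}"
    have "F = F' \<union> {e\<in>F. v\<in>e}" by (auto simp: F'_def)
    moreover have "F' \<inter> {e\<in>F. v\<in>e} = {}" by (auto simp: F'_def)
    ultimately have "card F = card F' + degree F v"
      unfolding degree_def using finF by (metis (no_types, lifting) card_Un_disjoint finite_Un)
    then have c1: "card F' \<ge> card S'" using cF v fin by (simp add: S'_def)
    have ne': "S' \<noteq> {}"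
    proof
      assume "S' = {}"
      then have Sv: "S = {v}" using v by (auto simp: S'_def)
      have "F = {}"
      proof (rule ccontr)
        assume "F \<noteq> {}"
        then obtain e where "e \<in> F" by blast
        then obtain a b where "a \<noteq> b" "a \<in> S" "b \<in> S" using edges by blast
        then show False using Sv by auto
      qed
      then show False using cF Sv by simp
    qed
    have edges': "\<forall>e\<in>F'. \<exists>x y. x \<noteq> y \<and> x \<in> S' \<and> y \<in> S' \<and> e = {x, y}"
      using edges by (fastforce simp: F'_def S'_def)
    have "card S' < card S" using v fin by (simp add: S'_def card_gt_0_iff) (metis card_gt_0_iff diff_Suc_less empty_iff)
    then have "has_cycle S' F'" using less.hyps[of S' F'] fin ne' edges' c1 by (simp add: S'_def)
    then show ?thesis by (rule has_cycle_mono) (auto simp: S'_def F'_def)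
  qed
qed



locale cg =
  fixes V :: "'a set" and E :: "'a set set"
  assumes cub: "cubic V E" and c4: "cyclically_4_edge_connected V E"
begin

definition out :: "'a set \<Rightarrow> 'a set set" where "out X = cut_edges E X (V - X)"

lemma finV: "finite V" using cub by (simp add: cubic_def graph_def)
lemma edgeE: "e \<in> E \<Longrightarrow> \<exists>x y. x\<noteq>y \<and> x\<in>V \<and> y\<in>V \<and> e={x,y}"
  using cub by (simp add: cubic_def graph_def)
lemma finE: "finite E"
proof -
  have "E \<subseteq> Pow V" using edgeE by blast
  then show ?thesis using finV finite_subset by blast
qed
lemma deg3: "v\<in>V \<Longrightarrow> degree E v = 3" using cub by (simp add: cubic_def)

lemma out_alt: "out X = {e\<in>E. e \<inter> X \<noteq> {} \<and> \<not> e \<subseteq> X}"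
  unfolding out_def cut_edges_def using edgeE by blast

lemma count:
  assumes XV: "X \<subseteq> V"
  shows "3 * card X = 2 * card (induced_edges E X) + card (out X)"
proof -
  have finX: "finite X" using XV finV finite_subset by blast
  have "3 * card X = (\<Sum>v\<in>X. degree E v)" using deg3 XV by (simp add: subset_iff)
  also have "\<dots> = (\<Sum>v\<in>X. \<Sum>e\<in>E. if v \<in> e then (1::nat) else 0)"
    unfolding degree_def using sum.inter_filter[OF finE, of "\<lambda>_. 1::nat"] by simp
  also have "\<dots> = (\<Sum>e\<in>E. \<Sum>v\<in>X. if v \<in> e then (1::nat) else 0)" by (rule sum.swap)
  also have "\<dots> = (\<Sum>e\<in>E. (if e \<subseteq> X then (2::nat) else 0) + (if e \<in> out X then (1::nat) else 0))"
  proof (rule sum.cong[OF refl])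
    fix e assume eE: "e \<in> E"
    then obtain x y where xy: "x \<noteq> y" "e = {x,y}" using edgeE by blast
    have "(\<Sum>v\<in>X. if v \<in> e then (1::nat) else 0) = card {v\<in>X. v \<in> e}"
      using sum.inter_filter[OF finX, of "\<lambda>_. 1::nat"] by simp
    also have "{v\<in>X. v \<in> e} = X \<inter> {x,y}" using xy by auto
    finally have "(\<Sum>v\<in>X. if v \<in> e then (1::nat) else 0) = card (X \<inter> {x,y})" .
    then show "(\<Sum>v\<in>X. if v \<in> e then (1::nat) else 0) =
       (if e \<subseteq> X then (2::nat) else 0) + (if e \<in> out X then (1::nat) else 0)"
      using xy eE by (cases "x \<in> X"; cases "y \<in> X") (auto simp: out_alt)
  qed
  also have "\<dots> = (\<Sum>e\<in>E. if e \<subseteq> X then (2::nat) else 0) + (\<Sum>e\<in>E. if e \<in> out X then (1::nat) else 0)"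
    by (rule sum.distrib)
  also have "(\<Sum>e\<in>E. if e \<subseteq> X then (2::nat) else 0) = 2 * card (induced_edges E X)"
    unfolding induced_edges_def using sum.inter_filter[OF finE, of "\<lambda>_. 2::nat" "\<lambda>e. e \<subseteq> X"] by simp
  also have "(\<Sum>e\<in>E. if e \<in> out X then (1::nat) else 0) = card (out X)"
  proof -
    have "out X = {e\<in>E. e \<in> out X}" using out_alt by auto
    then show ?thesis using sum.inter_filter[OF finE, of "\<lambda>_. 1::nat" "\<lambda>e. e \<in> out X"] by simp
  qed
  finally show ?thesis .
qed

lemma ie_edges: "X \<subseteq> V \<Longrightarrow> \<forall>e\<in>induced_edges E X. \<exists>x y. x \<noteq> y \<and> x \<in> X \<and> y \<in> X \<and> e = {x, y}"
  unfolding induced_edges_def using edgeE by fastforce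

lemma acyclic_out:
  assumes XV: "X \<subseteq> V" and ne: "X \<noteq> {}" and nc: "\<not> has_cycle X (induced_edges E X)"
  shows "card (out X) \<ge> card X + 2"
proof -
  have finX: "finite X" using XV finV finite_subset by blast
  have "card (induced_edges E X) < card X"
    using many_edges_cycle[OF finX ne ie_edges[OF XV]] nc by force
  then show ?thesis using count[OF XV] by simp
qed

lemma cyclic_out:
  assumes XV: "X \<subseteq> V" and c1: "has_cycle X (induced_edges E X)"
    and c2: "has_cycle (V - X) (induced_edges E (V - X))"
  shows "card (out X) \<ge> 4"
  using c4 c1 c2 XV unfolding cyclically_4_edge_connected_def cyclic_cut_def is_partition_def out_def
  by (metis Diff_disjoint Diff_partition)

lemma deg_split:
  assumes XV: "X \<subseteq> V" and uX: "u \<in> X"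
  shows "3 = degree (induced_edges E X) u + card {e\<in>out X. u \<in> e}"
proof -
  have "{e\<in>E. u \<in> e} = {e\<in>induced_edges E X. u \<in> e} \<union> {e\<in>out X. u \<in> e}"
    using uX by (auto simp: induced_edges_def out_alt)
  moreover have "{e\<in>induced_edges E X. u \<in> e} \<inter> {e\<in>out X. u \<in> e} = {}"
    by (auto simp: induced_edges_def out_alt)
  moreover have "finite {e\<in>E. u \<in> e}" using finE by simp
  ultimately have "card {e\<in>E. u \<in> e} = card {e\<in>induced_edges E X. u \<in> e} + card {e\<in>out X. u \<in> e}"
    by (metis (no_types, lifting) card_Un_disjoint finite_Un)
  then show ?thesis using deg3 XV uX unfolding degree_def by auto
qed

lemma one_out:
  assumes XV: "X \<subseteq> V" and o4: "card (out X) = 4" and c2: "has_cycle (V - X) (induced_edges E (V - X))"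
    and c3: "card X \<ge> 3" and uX: "u \<in> X"
  shows "card {e\<in>out X. u \<in> e} \<le> 1"
proof (rule ccontr)
  assume j: "\<not> card {e\<in>out X. u \<in> e} \<le> 1"
  define X' where "X' = X - {u}"
  have X'V: "X' \<subseteq> V" using XV by (auto simp: X'_def)
  have finX: "finite X" using XV finV finite_subset by blast
  have cX': "card X' = card X - 1" using uX finX by (simp add: X'_def)
  have ieX: "induced_edges E X = induced_edges E X' \<union> {e\<in>induced_edges E X. u \<in> e}"
    by (auto simp: induced_edges_def X'_def)
  have "induced_edges E X' \<inter> {e\<in>induced_edges E X. u \<in> e} = {}"
    by (auto simp: induced_edges_def X'_def)
  moreover have "finite (induced_edges E X)" using finE by (simp add: induced_edges_def)
  ultimately have "card (induced_edges E X) = card (induced_edges E X') + degree (induced_edges E X) u"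
    unfolding degree_def using ieX by (metis (no_types, lifting) card_Un_disjoint finite_Un)
  moreover have "3 = degree (induced_edges E X) u + card {e\<in>out X. u \<in> e}" by (rule deg_split[OF XV uX])
  moreover note count[OF XV] count[OF X'V]
  ultimately have o': "card (out X') \<le> 3" using o4 j cX' c3 by linarith
  have ne: "X' \<noteq> {}" using cX' c3 by auto
  show False
  proof (cases "has_cycle X' (induced_edges E X')")
    case True
    have "has_cycle (V - X') (induced_edges E (V - X'))"
      by (rule has_cycle_mono[OF c2]) (auto simp: X'_def induced_edges_def)
    then show False using cyclic_out[OF X'V True] o' by simp
  next
    case False
    then show False using acyclic_out[OF X'V ne] o' cX' c3 by simp
  qed
qed

end



context cg
begin

lemma single_side:
  assumes XV: "X \<subseteq> V" and o4: "card (out X) = 4" and c2: "card X \<ge> 2"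
    and nc: "\<not> has_cycle X (induced_edges E X)"
  shows "\<exists>a b. a \<noteq> b \<and> X = {a,b} \<and> induced_edges E X = {{a,b}}"
proof -
  have finX: "finite X" using XV finV finite_subset by blast
  have ne: "X \<noteq> {}" using c2 by auto
  have cX: "card X = 2" using acyclic_out[OF XV ne nc] o4 c2 by simp
  have "card (induced_edges E X) = 1" using count[OF XV] cX o4 by simp
  then obtain f where f: "induced_edges E X = {f}" using card_1_singletonE by blast
  then have "f \<in> induced_edges E X" by simp
  then obtain a b where ab: "a \<noteq> b" "a \<in> X" "b \<in> X" "f = {a,b}" using ie_edges[OF XV] by blast
  have "{a,b} \<subseteq> X" using ab by simp
  moreover have "card {a,b} = 2" using ab by simp
  ultimately have "X = {a,b}" using cX finX by (metis card_subset_eq)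
  then show ?thesis using ab f by blast
qed

lemma corner:
  assumes XV: "X \<subseteq> V" and o4: "card (out X) = 4" and c2: "has_cycle (V - X) (induced_edges E (V - X))"
    and c3: "card X \<ge> 3" and uX: "u \<in> X" and c: "c \<in> out X" "u \<in> c"
  shows "u \<in> corners X (induced_edges E X)"
proof -
  have "card {e\<in>out X. u \<in> e} \<le> 1" by (rule one_out[OF XV o4 c2 c3 uX])
  moreover have "card {e\<in>out X. u \<in> e} \<ge> 1"
  proof -
    have "finite {e\<in>out X. u \<in> e}" using finE by (simp add: out_alt)
    then show ?thesis using c by (metis (mono_tags, lifting) One_nat_def card_0_eq empty_iff
          less_one mem_Collect_eq not_le)
  qed
  ultimately show ?thesis using deg_split[OF XV uX] uX unfolding corners_def by simp
qed

lemma distinct_end: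
  assumes BV: "B \<subseteq> V" and oB: "card (out B) = 4" and cB: "has_cycle (V - B) (induced_edges E (V - B))"
    and c4B: "card B \<ge> 4" and XB: "X \<subseteq> B" and oX: "card (out X) = 4" and c2X: "card X \<ge> 2"
    and cX: "has_cycle (V - X) (induced_edges E (V - X))"
    and c1: "{u,v} \<in> out X" and c2: "{u,v'} \<in> out X" and vv: "v \<noteq> v'"
    and uX: "u \<in> X" and vX: "v \<notin> X" "v' \<notin> X"
    and rest: "\<forall>f\<in>out X. f \<noteq> {u,v} \<and> f \<noteq> {u,v'} \<longrightarrow> f \<in> out B"
  shows False
proof -
  have XV: "X \<subseteq> V" using XB BV by auto
  have finX: "finite X" using XV finV finite_subset by blast
  have sub2: "{{u,v},{u,v'}} \<subseteq> {e\<in>out X. u \<in> e}" using c1 c2 by auto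
  have fin2: "finite {e\<in>out X. u \<in> e}" using finE by (simp add: out_alt)
  have "card {{u,v},{u,v'}} = 2" using vv by (simp add: doubleton_eq_iff)
  then have ge2: "card {e\<in>out X. u \<in> e} \<ge> 2" using card_mono[OF fin2 sub2] by simp
  show False
  proof (cases "card X \<ge> 3")
    case True
    then show False using one_out[OF XV oX cX True uX] ge2 by simp
  next
    case False
    then have cX2: "card X = 2" using c2X by simp
    have "card (X - {u}) = 1" using cX2 uX finX by simp
    then obtain w where "X - {u} = {w}" using card_1_singletonE by blast
    then have w: "w \<in> X" "w \<noteq> u" by auto
    have Xuw: "X = {u,w}"
    proof -
      have "{u,w} \<subseteq> X" using w uX by simp
      moreover have "card {u,w} = 2" using w by simp
      ultimately show ?thesis using cX2 finX by (metis card_subset_eq)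
    qed
    have "{e\<in>induced_edges E X. w \<in> e} \<subseteq> {{u,w}}"
    proof
      fix f assume "f \<in> {e\<in>induced_edges E X. w \<in> e}"
      then have fi: "f \<in> induced_edges E X" "w \<in> f" by auto
      then obtain a b where "a \<noteq> b" "a \<in> X" "b \<in> X" "f = {a,b}" using ie_edges[OF XV] by blast
      then show "f \<in> {{u,w}}" using Xuw by auto
    qed
    then have "degree (induced_edges E X) w \<le> 1" unfolding degree_def
      using card_mono[of "{{u,w}}"] by fastforce
    then have dw: "card {e\<in>out X. w \<in> e} \<ge> 2" using deg_split[OF XV w(1)] by simp
    have "{e\<in>out X. w \<in> e} \<subseteq> {e\<in>out B. w \<in> e}"
    proof
      fix f assume f: "f \<in> {e\<in>out X. w \<in> e}"
      have "w \<noteq> v" "w \<noteq> v'" using w vX by auto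
      then have "f \<noteq> {u,v} \<and> f \<noteq> {u,v'}" using f w by auto
      then show "f \<in> {e\<in>out B. w \<in> e}" using rest f by auto
    qed
    moreover have "finite {e\<in>out B. w \<in> e}" using finE by (simp add: out_alt)
    ultimately have "card {e\<in>out B. w \<in> e} \<ge> 2" using dw by (meson card_mono le_trans)
    moreover have "card {e\<in>out B. w \<in> e} \<le> 1"
      using one_out[OF BV oB cB, of w] c4B XB w by auto
    ultimately show False by simp
  qed
qed

end



context cg
begin

lemma net:
  assumes H5: "\<forall>A B. cyclic_k_cut 4 V E A B \<and> e \<subseteq> A \<longrightarrow> \<not> solid E B"
  shows "cyclic_k_cut 4 V E A B \<Longrightarrow> e \<subseteq> A \<Longrightarrow> twisted_net B (induced_edges E B)"
proof (induction "card B" arbitrary: A B rule: less_induct)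
  case less
  note kc = less.prems(1) and eA = less.prems(2)
  have part: "is_partition V A B" and cycA: "has_cycle A (induced_edges E A)"
    and cycB: "has_cycle B (induced_edges E B)" and c4AB: "card (cut_edges E A B) = 4"
    using kc by (auto simp: cyclic_k_cut_def cyclic_cut_def)
  have BV: "B \<subseteq> V" and AVB: "A = V - B" using part by (auto simp: is_partition_def)
  have finV': "finite V" by (rule finV)
  have finB: "finite B" using BV finV finite_subset by blast
  have oB: "card (out B) = 4"
  proof -
    have "out B = cut_edges E A B" unfolding out_def cut_edges_def AVB by blast
    then show ?thesis using c4AB by simp
  qed
  have cycV: "\<And>X. X \<subseteq> B \<Longrightarrow> has_cycle (V - X) (induced_edges E (V - X))"
    by (rule has_cycle_mono[OF cycA]) (auto simp: AVB induced_edges_def)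
  have "\<not> solid E B" using H5 kc eA by blast
  then obtain B1 B2 where p12: "is_partition B B1 B2" and cB1: "card B1 \<ge> 2" and cB2: "card B2 \<ge> 2"
    and cC: "card (cut_edges (induced_edges E B) B1 B2) = 2"
    unfolding solid_def by blast
  define C where "C = cut_edges (induced_edges E B) B1 B2"
  have BU: "B = B1 \<union> B2" and BI: "B1 \<inter> B2 = {}" using p12 by (auto simp: is_partition_def)
  have B1V: "B1 \<subseteq> V" and B2V: "B2 \<subseteq> V" using BU BV by auto
  have finB1: "finite B1" and finB2: "finite B2" using finB BU by auto
  have cB: "card B = card B1 + card B2" using BU BI finB1 finB2 by (simp add: card_Un_disjoint)
  have ieB: "induced_edges E B = (induced_edges E B1 \<union> induced_edges E B2) \<union> C"
  proof -
    have "\<And>f. f \<in> E \<Longrightarrow> f \<subseteq> B \<Longrightarrow> f \<subseteq> B1 \<or> f \<subseteq> B2 \<or> (f \<inter> B1 \<noteq> {} \<and> f \<inter> B2 \<noteq> {})"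
      using BU by blast
    then show ?thesis unfolding C_def cut_edges_def induced_edges_def using BU
      by blast
  qed
  have finIE: "\<And>X. finite (induced_edges E X)" using finE by (simp add: induced_edges_def)
  have d1: "induced_edges E B1 \<inter> induced_edges E B2 = {}"
  proof -
    have "\<And>f. f \<in> E \<Longrightarrow> f \<noteq> {}" using edgeE by blast
    then show ?thesis using BI unfolding induced_edges_def by blast
  qed
  have d2: "(induced_edges E B1 \<union> induced_edges E B2) \<inter> C = {}"
    unfolding C_def cut_edges_def induced_edges_def using BI by blast
  have cieB: "card (induced_edges E B) = card (induced_edges E B1) + card (induced_edges E B2) + 2"
  proof -
    have fC: "finite C" using finIE[of B] ieB by (metis finite_Un)
    have "card (induced_edges E B) = card (induced_edges E B1 \<union> induced_edges E B2) + card C"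
      using ieB d2 finIE fC by (metis card_Un_disjoint finite_Un)
    moreover have "card (induced_edges E B1 \<union> induced_edges E B2) = card (induced_edges E B1) + card (induced_edges E B2)"
      using d1 finIE by (simp add: card_Un_disjoint)
    ultimately show ?thesis using cC by (simp add: C_def)
  qed
  have sum8: "card (out B1) + card (out B2) = 8"
    using count[OF BV] count[OF B1V] count[OF B2V] cB cieB oB by linarith
  have ge4: "\<And>X. X \<subseteq> B \<Longrightarrow> card X \<ge> 2 \<Longrightarrow> card (out X) \<ge> 4"
  proof -
    fix X assume XB: "X \<subseteq> B" and c2: "card X \<ge> 2"
    have XV: "X \<subseteq> V" using XB BV by auto
    show "card (out X) \<ge> 4"
    proof (cases "has_cycle X (induced_edges E X)")
      case True then show ?thesis using cyclic_out[OF XV True cycV[OF XB]] by simp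
    next
      case False
      have "X \<noteq> {}" using c2 by auto
      then show ?thesis using acyclic_out[OF XV _ False] c2 by simp
    qed
  qed
  have o1: "card (out B1) = 4" and o2: "card (out B2) = 4"
    using ge4[of B1] ge4[of B2] cB1 cB2 BU sum8 by auto
  obtain c1 c2 where C12: "C = {c1, c2}" and c12: "c1 \<noteq> c2"
    using cC unfolding C_def[symmetric] by (meson card_2_iff)
  have endp: "\<And>c. c \<in> C \<Longrightarrow> \<exists>u v. u \<in> B1 \<and> v \<in> B2 \<and> c = {u,v}"
  proof -
    fix c assume "c \<in> C"
    then have cE: "c \<in> E" and cB': "c \<subseteq> B" and m1: "c \<inter> B1 \<noteq> {}" and m2: "c \<inter> B2 \<noteq> {}"
      unfolding C_def cut_edges_def induced_edges_def by auto
    obtain x y where "x \<noteq> y" "c = {x,y}" using edgeE[OF cE] by blast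
    then show "\<exists>u v. u \<in> B1 \<and> v \<in> B2 \<and> c = {u,v}" using m1 m2 BI
      by (auto simp: insert_commute)
  qed
  obtain u v where uv: "u \<in> B1" "v \<in> B2" "c1 = {u,v}" using endp C12 by blast
  obtain u' v' where uv': "u' \<in> B1" "v' \<in> B2" "c2 = {u',v'}" using endp C12 by blast
  have Cout1: "C \<subseteq> out B1" and Cout2: "C \<subseteq> out B2"
    unfolding C_def cut_edges_def induced_edges_def out_alt using BI by blast+
  have rest1: "\<forall>f\<in>out B1. f \<notin> C \<longrightarrow> f \<in> out B"
    unfolding C_def cut_edges_def induced_edges_def out_alt using BU BI by blast
  have rest2: "\<forall>f\<in>out B2. f \<notin> C \<longrightarrow> f \<in> out B"
    unfolding C_def cut_edges_def induced_edges_def out_alt using BU BI by blast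
  have cyc1: "has_cycle (V - B1) (induced_edges E (V - B1))" using cycV BU by blast
  have cyc2: "has_cycle (V - B2) (induced_edges E (V - B2))" using cycV BU by blast
  have cycB0: "has_cycle (V - B) (induced_edges E (V - B))" using cycV by blast
  have c4B: "card B \<ge> 4" using cB cB1 cB2 by simp
  have uu: "u \<noteq> u'"
  proof
    assume "u = u'"
    then have vv: "v \<noteq> v'" using c12 uv uv' by auto
    have vn: "v \<notin> B1" "v' \<notin> B1" using uv uv' BI by auto
    show False
      by (rule distinct_end[OF BV oB cycB0 c4B _ o1 cB1 cyc1, of u v v'])
        (use BU Cout1 C12 uv uv' \<open>u = u'\<close> vv vn rest1 in auto)
  qed
  have vv: "v \<noteq> v'"
  proof
    assume "v = v'"
    then have uu: "u \<noteq> u'" using c12 uv uv' by auto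
    have un: "u \<notin> B2" "u' \<notin> B2" using uv uv' BI by auto
    show False
      by (rule distinct_end[OF BV oB cycB0 c4B _ o2 cB2 cyc2, of v u u'])
        (use BU Cout2 C12 uv uv' \<open>v = v'\<close> uu un rest2 in \<open>auto simp: insert_commute\<close>)
  qed
  have side: "\<And>X Y. X \<subseteq> B \<Longrightarrow> Y \<noteq> {} \<Longrightarrow> Y \<subseteq> B \<Longrightarrow> X \<inter> Y = {} \<Longrightarrow> card (out X) = 4
       \<Longrightarrow> has_cycle X (induced_edges E X) \<Longrightarrow> twisted_net X (induced_edges E X)"
  proof -
    fix X Y assume XB: "X \<subseteq> B" and Yne: "Y \<noteq> {}" and YB: "Y \<subseteq> B" and XY: "X \<inter> Y = {}"
      and oX: "card (out X) = 4" and cyX: "has_cycle X (induced_edges E X)"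
    have lt: "card X < card B"
    proof -
      have "X \<subset> B" using XB Yne YB XY by blast
      then show ?thesis using finB by (simp add: psubset_card_mono)
    qed
    have "cyclic_k_cut 4 V E (V - X) X"
      unfolding cyclic_k_cut_def cyclic_cut_def is_partition_def
    proof (intro conjI)
      show "V - X \<union> X = V" using XB BV by auto
      show "(V - X) \<inter> X = {}" by auto
      show "has_cycle (V - X) (induced_edges E (V - X))" by (rule cycV[OF XB])
      show "has_cycle X (induced_edges E X)" by (rule cyX)
      have "cut_edges E (V - X) X = out X" unfolding out_def cut_edges_def by blast
      then show "card (cut_edges E (V - X) X) = 4" using oX by simp
    qed
    moreover have "e \<subseteq> V - X" using eA AVB XB by auto
    ultimately show "twisted_net X (induced_edges E X)" using less.hyps[OF lt] by blast
  qed
  have ieB': "induced_edges E B = induced_edges E B1 \<union> induced_edges E B2 \<union> {{u,v},{u',v'}}"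
    using ieB C12 uv uv' by simp
  have corn1: "has_cycle B1 (induced_edges E B1) \<Longrightarrow> u \<in> corners B1 (induced_edges E B1) \<and> u' \<in> corners B1 (induced_edges E B1)"
  proof -
    assume h: "has_cycle B1 (induced_edges E B1)"
    have c3: "card B1 \<ge> 3" using has_cycle_card[OF h finB1] .
    have "{u,v} \<in> out B1" "{u',v'} \<in> out B1" using Cout1 C12 uv uv' by auto
    then show ?thesis using corner[OF B1V o1 cyc1 c3] uv uv' BU by blast
  qed
  have corn2: "has_cycle B2 (induced_edges E B2) \<Longrightarrow> v \<in> corners B2 (induced_edges E B2) \<and> v' \<in> corners B2 (induced_edges E B2)"
  proof -
    assume h: "has_cycle B2 (induced_edges E B2)"
    have c3: "card B2 \<ge> 3" using has_cycle_card[OF h finB2] .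
    have "{u,v} \<in> out B2" "{u',v'} \<in> out B2" using Cout2 C12 uv uv' by auto
    then show ?thesis using corner[OF B2V o2 cyc2 c3] uv uv' BU by blast
  qed
  have B1ne: "B1 \<noteq> {}" and B2ne: "B2 \<noteq> {}" using cB1 cB2 by auto
  show ?case
  proof (cases "has_cycle B1 (induced_edges E B1)")
    case h1: True
    have t1: "twisted_net B1 (induced_edges E B1)" using side[of B1 B2] h1 o1 BU BI B2ne by auto
    show ?thesis
    proof (cases "has_cycle B2 (induced_edges E B2)")
      case h2: True
      have t2: "twisted_net B2 (induced_edges E B2)" using side[of B2 B1] h2 o2 BU BI B1ne by auto
      have "twisted_net (B1 \<union> B2) (induced_edges E B1 \<union> induced_edges E B2 \<union> {{u,v},{u',v'}})"
        by (rule twisted_net.step_net[OF t1 t2 BI]) (use corn1[OF h1] corn2[OF h2] uu vv in auto)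
      then show ?thesis using BU ieB' by simp
    next
      case h2: False
      obtain a b where ab: "a \<noteq> b" "B2 = {a,b}" "induced_edges E B2 = {{a,b}}"
        using single_side[OF B2V o2 cB2 h2] by blast
      have se: "is_single_edge B2 (induced_edges E B2)" using ab unfolding is_single_edge_def by blast
      have "twisted_net (B1 \<union> B2) (induced_edges E B1 \<union> induced_edges E B2 \<union> {{u,v},{u',v'}})"
        by (rule twisted_net.step_edge[OF t1 se BI]) (use corn1[OF h1] uu vv uv uv' in auto)
      then show ?thesis using BU ieB' by simp
    qed
  next
    case h1: False
    obtain a b where ab: "a \<noteq> b" "B1 = {a,b}" "induced_edges E B1 = {{a,b}}"
      using single_side[OF B1V o1 cB1 h1] by blast
    have se1: "is_single_edge B1 (induced_edges E B1)" using ab unfolding is_single_edge_def by blast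
    show ?thesis
    proof (cases "has_cycle B2 (induced_edges E B2)")
      case h2: True
      have t2: "twisted_net B2 (induced_edges E B2)" using side[of B2 B1] h2 o2 BU BI B1ne by auto
      have BI': "B2 \<inter> B1 = {}" using BI by auto
      have "twisted_net (B2 \<union> B1) (induced_edges E B2 \<union> induced_edges E B1 \<union> {{v,u},{v',u'}})"
        by (rule twisted_net.step_edge[OF t2 se1 BI']) (use corn2[OF h2] uu vv uv uv' in auto)
      moreover have "B2 \<union> B1 = B" using BU by auto
      moreover have "induced_edges E B2 \<union> induced_edges E B1 \<union> {{v,u},{v',u'}} = induced_edges E B"
        using ieB' by (auto simp: insert_commute)
      ultimately show ?thesis by simp
    next
      case h2: False
      obtain c d where cd: "c \<noteq> d" "B2 = {c,d}" "induced_edges E B2 = {{c,d}}"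
        using single_side[OF B2V o2 cB2 h2] by blast
      have B1e: "B1 = {u,u'}" using ab uu uv uv' by auto
      have B2e: "B2 = {v,v'}" using cd vv uv uv' by auto
      have ie1: "induced_edges E B1 = {{u,u'}}" using ab B1e by simp
      have ie2: "induced_edges E B2 = {{v,v'}}" using cd B2e by simp
      have "is_4cycle B (induced_edges E B)"
        unfolding is_4cycle_def
      proof (intro exI conjI)
        show "distinct [u, u', v', v]" using uu vv uv uv' BI by auto
        show "B = {u, u', v', v}" using BU B1e B2e by auto
        show "induced_edges E B = {{u, u'}, {u', v'}, {v', v}, {v, u}}"
          using ieB' ie1 ie2 by (auto simp: insert_commute)
      qed
      then show ?thesis by (rule twisted_net.base)
    qed
  qed
qed

end

theorem mainTheorem15:
  fixes V :: "'a set" and E :: "'a set set" and e :: "'a set"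
  assumes "cubic V E"
    and "cyclically_4_edge_connected V E"
    and "e \<in> E"
    and "\<forall>A B. cyclic_k_cut 4 V E A B \<longrightarrow> e \<notin> cut_edges E A B"
    and "\<forall>A B. cyclic_k_cut 4 V E A B \<and> e \<subseteq> A \<longrightarrow> \<not> solid E B"
  shows "\<forall>A B. cyclic_k_cut 4 V E A B \<and> e \<subseteq> A \<longrightarrow> twisted_net B (induced_edges E B)"
proof -
  interpret cg V E using assms(1,2) by unfold_locales
  show ?thesis using net[OF assms(5)] by blast
qed

end
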